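(* Fix an integer $m\geq 2$. Let $\Gamma$ be a distance-regular graph with smallest eigenvalue at least $-m$, valency $k\geq 3$, diameter $D\geq 2$ and intersection numbers $a_1$ and $c_2$. Define a line to be a maximal clique $C$ of $\Gamma$ with $|C|\ge a_1+2-(m-1)(c_2-1)$. If $a_1>m^2c_2$, then every vertex lies in at most $m$ lines, and each edge lies in a unique line.
   Context: A finite connected graph $\Gamma$ with diameter $D$ is distance-regular if there are integers $b_i,c_i$ ($0\le i\le D$) such that for any vertices $x,y$ with $d(x,y)=i$, exactly $c_i$ neighbours of $y$ are at distance $i-1$ from $x$ and exactly $b_i$ neighbours of $y$ are at distance $i+1$ from $x$; its valency is $k=b_0$ and $a_i:=k-b_i-c_i$. The smallest eigenvalue is that of the adjacency matrix. A clique is a set of pairwise adjacent vertices; it is maximal if it is not properly contained in another clique. *)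

theory Defs
  imports "HOL-Analysis.Analysis"
begin

definition simple_graph :: "('a \<Rightarrow> 'a \<Rightarrow> bool) \<Rightarrow> bool" where
  "simple_graph adj \<longleftrightarrow> (\<forall>x y. adj x y \<longrightarrow> adj y x) \<and> (\<forall>x. \<not> adj x x)"

definition connected_graph :: "('a \<Rightarrow> 'a \<Rightarrow> bool) \<Rightarrow> bool" where
  "connected_graph adj \<longleftrightarrow> (\<forall>x y. \<exists>n. (adj ^^ n) x y)"

definition gdist :: "('a \<Rightarrow> 'a \<Rightarrow> bool) \<Rightarrow> 'a \<Rightarrow> 'a \<Rightarrow> nat" where
  "gdist adj x y = (LEAST n. (adj ^^ n) x y)"

definition diameter :: "('a::finite \<Rightarrow> 'a \<Rightarrow> bool) \<Rightarrow> nat" where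
  "diameter adj = Max {gdist adj x y | x y. True}"

definition distance_regular :: "('a::finite \<Rightarrow> 'a \<Rightarrow> bool) \<Rightarrow> (nat \<Rightarrow> nat) \<Rightarrow> (nat \<Rightarrow> nat) \<Rightarrow> bool" where
  "distance_regular adj b c \<longleftrightarrow> simple_graph adj \<and> connected_graph adj \<and>
     (\<forall>x y i. gdist adj x y = i \<longrightarrow>
        (i \<ge> 1 \<longrightarrow> card {z. adj y z \<and> gdist adj x z = i - 1} = c i) \<and>
        card {z. adj y z \<and> gdist adj x z = i + 1} = b i)"

definition adj_matrix :: "('a::finite \<Rightarrow> 'a \<Rightarrow> bool) \<Rightarrow> real ^ 'a ^ 'a" where
  "adj_matrix adj = (\<chi> i j. if adj i j then 1 else 0)"

definition is_eigenvalue :: "real ^ 'n ^ 'n \<Rightarrow> real \<Rightarrow> bool" where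
  "is_eigenvalue A mu \<longleftrightarrow> (\<exists>v. v \<noteq> 0 \<and> A *v v = mu *\<^sub>R v)"

definition clique :: "('a \<Rightarrow> 'a \<Rightarrow> bool) \<Rightarrow> 'a set \<Rightarrow> bool" where
  "clique adj C \<longleftrightarrow> (\<forall>x\<in>C. \<forall>y\<in>C. x \<noteq> y \<longrightarrow> adj x y)"

definition maximal_clique :: "('a \<Rightarrow> 'a \<Rightarrow> bool) \<Rightarrow> 'a set \<Rightarrow> bool" where
  "maximal_clique adj C \<longleftrightarrow> clique adj C \<and> (\<forall>C'. clique adj C' \<and> C \<subseteq> C' \<longrightarrow> C' = C)"

end

theory Submission
  imports Defs
begin


definition bform :: "real^'n::finite^'n \<Rightarrow> real^'n \<Rightarrow> real^'n \<Rightarrow> real" where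
  "bform M v w = (\<Sum>i\<in>UNIV. \<Sum>j\<in>UNIV. M$i$j * v$i * w$j)"

lemma bform_expand:
  fixes M :: "real^'n::finite^'n"
  assumes sym: "\<And>i j. M$i$j = M$j$i"
  shows "bform M (u + t *\<^sub>R e) (u + t *\<^sub>R e) = bform M u u + 2*t* bform M e u + t^2 * bform M e e"
proof -
  have s: "bform M u e = bform M e u"
    unfolding bform_def
    by (subst sum.swap) (simp add: sym mult.commute mult.left_commute)
  have "bform M (u + t *\<^sub>R e) (u + t *\<^sub>R e) = bform M u u + t * bform M u e + t * bform M e u + t^2 * bform M e e"
    unfolding bform_def
    by (simp add: algebra_simps sum.distrib sum_distrib_left power2_eq_square)
  with s show ?thesis by simp
qed

lemma bform_mv: "bform M e u = e \<bullet> (M *v u)"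
  unfolding bform_def inner_vec_def matrix_vector_mult_def
  by (simp add: sum_distrib_left mult.assoc mult.left_commute)

lemma bform_scale: "bform M (c *\<^sub>R v) (c *\<^sub>R v) = c^2 * bform M v v"
  unfolding bform_def by (simp add: sum_distrib_left power2_eq_square algebra_simps)

lemma bform_cont: "continuous_on S (\<lambda>v. bform M v v)"
  unfolding bform_def by (intro continuous_intros)

lemma psd_vec:
  fixes M :: "real^'n::finite^'n"
  assumes sym: "\<And>i j. M$i$j = M$j$i"
    and ev: "\<forall>mu. is_eigenvalue M mu \<longrightarrow> mu \<ge> - r"
  shows "bform M v v \<ge> - r * (v \<bullet> v)"
proof (rule ccontr)
  assume neg: "\<not> ?thesis"
  have "compact (sphere (0::real^'n) 1)" by simp
  moreover have "sphere (0::real^'n) 1 \<noteq> {}" by simp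
  ultimately obtain u where uS: "u \<in> sphere 0 1" and umin: "\<forall>y\<in>sphere 0 1. bform M u u \<le> bform M y y"
    using continuous_attains_inf[OF _ _ bform_cont] by blast
  define l where "l = bform M u u"
  have uu: "u \<bullet> u = 1" using uS by (simp add: power2_norm_eq_inner[symmetric])
  have gen: "bform M y y \<ge> l * (y \<bullet> y)" for y
  proof (cases "y = 0")
    case True then show ?thesis by (simp add: bform_def)
  next
    case False
    define z where "z = (1/norm y) *\<^sub>R y"
    have "z \<in> sphere 0 1" using False by (simp add: z_def)
    hence "l \<le> bform M z z" using umin l_def by simp
    also have "\<dots> = (1/norm y)^2 * bform M y y" by (simp add: z_def bform_scale)
    finally have "l * (norm y)^2 \<le> bform M y y" using False
      by (simp add: field_simps)
    thus ?thesis by (simp add: power2_norm_eq_inner)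
  qed
  have vne: "v \<noteq> 0" using neg by (auto simp: bform_def)
  have lt: "l < - r"
  proof -
    have "l * (v \<bullet> v) \<le> bform M v v" by (rule gen)
    also have "\<dots> < - r * (v \<bullet> v)" using neg by simp
    finally have "l * (v \<bullet> v) < (- r) * (v \<bullet> v)" by simp
    moreover have "v \<bullet> v > 0" using vne by simp
    ultimately show ?thesis using mult_less_cancel_right_pos[of "v \<bullet> v" l "-r"] by linarith
  qed
  define g where "g = M *v u - l *\<^sub>R u"
  define a where "a = g \<bullet> g"
  define bb where "bb = bform M g g - l * (g \<bullet> g)"
  have bb0: "bb \<ge> 0" using gen[of g] by (simp add: bb_def)
  have key: "2*t*a + t^2*bb \<ge> 0" for t
  proof -
    have h0: "bform M (u + t *\<^sub>R g) (u + t *\<^sub>R g) - l * ((u + t *\<^sub>R g) \<bullet> (u + t *\<^sub>R g)) \<ge> 0"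
      using gen by simp
    have e1: "bform M (u + t *\<^sub>R g) (u + t *\<^sub>R g) = l + 2*t*(g \<bullet> (M *v u)) + t^2 * bform M g g"
      using bform_expand[OF sym] by (simp add: l_def bform_mv)
    have e2: "(u + t *\<^sub>R g) \<bullet> (u + t *\<^sub>R g) = 1 + 2*t*(g \<bullet> u) + t^2 * (g \<bullet> g)"
      using uu by (simp add: inner_add_left inner_add_right inner_commute power2_eq_square algebra_simps)
    have e3: "a = g \<bullet> (M *v u) - l * (g \<bullet> u)"
      unfolding a_def g_def by (simp add: inner_diff_right)
    have "bform M (u + t *\<^sub>R g) (u + t *\<^sub>R g) - l * ((u + t *\<^sub>R g) \<bullet> (u + t *\<^sub>R g)) = 2*t*a + t^2*bb"
      unfolding e1 e2 e3 bb_def by (simp add: algebra_simps)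
    with h0 show ?thesis by simp
  qed
  have "a = 0"
  proof (rule ccontr)
    assume "a \<noteq> 0"
    hence apos: "a > 0" unfolding a_def by simp
    define t where "t = - a / (bb + 1)"
    have c0: "bb + 1 > 0" using bb0 by simp
    have tc: "t * (bb + 1) = - a" unfolding t_def using c0 by simp
    have tneg: "t < 0" unfolding t_def using c0 apos by (simp add: divide_pos_pos)
    have "2*t*a + t^2*bb \<le> 2*t*a + t^2*(bb+1)" by (simp add: algebra_simps)
    also have "\<dots> = t * (2*a + t*(bb+1))" by (simp add: power2_eq_square algebra_simps)
    also have "\<dots> = t * a" using tc by simp
    also have "\<dots> < 0" using tneg apos by (simp add: mult_neg_pos)
    finally show False using key[of t] by simp
  qed
  hence "g = 0" by (simp add: a_def)
  hence "M *v u = l *\<^sub>R u" by (simp add: g_def)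
  moreover have "u \<noteq> 0" using uu by auto
  ultimately have "is_eigenvalue M l" unfolding is_eigenvalue_def by blast
  with ev lt show False by force
qed




lemma psd_fun:
  fixes adj :: "'a::finite \<Rightarrow> 'a \<Rightarrow> bool"
  assumes sym: "\<And>x y. adj x y \<Longrightarrow> adj y x"
    and ev: "\<forall>mu. is_eigenvalue (adj_matrix adj) mu \<longrightarrow> mu \<ge> - r"
  shows "bform (adj_matrix adj) v v \<ge> - r * (v \<bullet> v)"
proof (rule psd_vec[OF _ ev])
  fix i j show "adj_matrix adj $ i $ j = adj_matrix adj $ j $ i"
    unfolding adj_matrix_def using sym by auto
qed

locale drg =
  fixes adj :: "'a::finite \<Rightarrow> 'a \<Rightarrow> bool" and b c :: "nat \<Rightarrow> nat" and m :: nat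
  assumes m2: "m \<ge> 2" and dr: "distance_regular adj b c"
    and ev: "\<forall>mu. is_eigenvalue (adj_matrix adj) mu \<longrightarrow> mu \<ge> - real m"
    and b03: "b 0 \<ge> 3" and diam: "diameter adj \<ge> 2"
    and big: "b 0 - b 1 - c 1 > m ^ 2 * c 2"
begin

abbreviation "A \<equiv> b 0 - b 1 - c 1"
abbreviation "gd \<equiv> gdist adj"
definition N where "N v = {z. adj v z}"

lemma sym: "adj x y \<Longrightarrow> adj y x"
  using dr unfolding distance_regular_def simple_graph_def by blast
lemma irr: "\<not> adj x x"
  using dr unfolding distance_regular_def simple_graph_def by blast
lemma conn: "\<exists>n. (adj ^^ n) x y"
  using dr unfolding distance_regular_def connected_graph_def by blast
lemma reach: "(adj ^^ gd x y) x y"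
  unfolding gdist_def using conn by (rule LeastI_ex)
lemma gd_le: "(adj ^^ n) x y \<Longrightarrow> gd x y \<le> n"
  unfolding gdist_def by (rule Least_le)
lemma drc: "gd x y = i \<Longrightarrow> i \<ge> 1 \<Longrightarrow> card {z. adj y z \<and> gd x z = i - 1} = c i"
  using dr unfolding distance_regular_def by blast
lemma drb: "gd x y = i \<Longrightarrow> card {z. adj y z \<and> gd x z = i + 1} = b i"
  using dr unfolding distance_regular_def by blast

lemma gd0: "gd x y = 0 \<longleftrightarrow> x = y"
proof
  assume "gd x y = 0" thus "x = y" using reach[of x y] by simp
next
  assume "x = y" thus "gd x y = 0" using gd_le[of 0 x y] by simp
qed

lemma gd1: "gd x z = 1 \<longleftrightarrow> adj x z"
proof
  assume h: "gd x z = 1" thus "adj x z" using reach[of x z] by (metis relpowp_1)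
next
  assume h: "adj x z"
  hence "x \<noteq> z" using irr by auto
  hence "gd x z \<noteq> 0" using gd0 by simp
  moreover have "gd x z \<le> 1" using gd_le[of 1 x z] h by (metis relpowp_1)
  ultimately show "gd x z = 1" by simp
qed

lemma gd2: "x \<noteq> z \<Longrightarrow> \<not> adj x z \<Longrightarrow> adj x y \<Longrightarrow> adj y z \<Longrightarrow> gd x z = 2"
proof -
  assume a: "x \<noteq> z" "\<not> adj x z" "adj x y" "adj y z"
  have "(adj ^^ Suc (Suc 0)) x z" using a by (intro relpowp_Suc_I[OF relpowp_Suc_I[OF relpowp_0_I]])
  hence "(adj ^^ 2) x z" by (simp add: numeral_2_eq_2)
  hence "gd x z \<le> 2" by (rule gd_le)
  moreover have "gd x z \<noteq> 0" "gd x z \<noteq> 1" using a gd0 gd1 by auto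
  ultimately show ?thesis by simp
qed

lemma cardN: "card (N v) = b 0"
proof -
  have "card {z. adj v z \<and> gd v z = 0 + 1} = b 0" using drb[of v v 0] gd0 by simp
  moreover have "{z. adj v z \<and> gd v z = 0 + 1} = N v" using gd1 by (auto simp: N_def)
  ultimately show ?thesis by simp
qed

lemma common: assumes "adj x y" shows "card (N x \<inter> N y) = A"
proof -
  have g: "gd x y = 1" using assms gd1 by simp
  have c1: "card {z. adj y z \<and> gd x z = 1 - 1} = c 1" using drc[OF g] by simp
  have "{z. adj y z \<and> gd x z = 1 - 1} = {x}" using gd0 assms sym by auto
  hence c1': "c 1 = 1" using c1 by simp
  have b1: "card {z. adj y z \<and> gd x z = 1 + 1} = b 1" using drb[OF g] by simp
  define D where "D = {z. adj y z \<and> gd x z = 2}"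
  have bD: "card D = b 1" using b1 by (simp add: D_def numeral_2_eq_2)
  have split: "N y = insert x ((N x \<inter> N y) \<union> D)"
  proof
    show "N y \<subseteq> insert x ((N x \<inter> N y) \<union> D)"
    proof
      fix z assume z: "z \<in> N y"
      show "z \<in> insert x ((N x \<inter> N y) \<union> D)"
      proof (cases "z = x \<or> adj x z")
        case True thus ?thesis using z by (auto simp: N_def)
      next
        case False
        hence "gd x z = 2" using gd2[of x z y] assms z by (auto simp: N_def)
        thus ?thesis using z by (auto simp: D_def N_def)
      qed
    qed
  next
    show "insert x ((N x \<inter> N y) \<union> D) \<subseteq> N y"
      using assms sym by (auto simp: N_def D_def)
  qed
  have dis1: "x \<notin> (N x \<inter> N y) \<union> D" using irr gd0[of x x] by (auto simp: N_def D_def)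
  have dis2: "(N x \<inter> N y) \<inter> D = {}"
  proof -
    { fix z assume "z \<in> N x" "z \<in> D"
      hence "gd x z = 1" "gd x z = 2" using gd1[of x z] by (auto simp: N_def D_def)
      hence False by simp }
    thus ?thesis by blast
  qed
  have "b 0 = card (N y)" using cardN by simp
  also have "\<dots> = card (insert x ((N x \<inter> N y) \<union> D))" using split by simp
  also have "\<dots> = 1 + card (N x \<inter> N y) + card D"
    using dis1 dis2 by (simp add: card_Un_disjoint)
  finally show ?thesis using bD c1' by simp
qed

lemma c2card: assumes "x \<noteq> z" "\<not> adj x z" "u \<in> N x \<inter> N z" shows "card (N x \<inter> N z) = c 2"
proof -
  have g: "gd x z = 2" using gd2[of x z u] assms sym by (auto simp: N_def)
  have "card {w. adj z w \<and> gd x w = 2 - 1} = c 2" using drc[OF g] by simp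
  moreover have "{w. adj z w \<and> gd x w = 2 - 1} = N x \<inter> N z" using gd1 by (auto simp: N_def)
  ultimately show ?thesis by simp
qed

lemma c2pos: "c 2 \<ge> 1"
proof -
  have fin: "finite {gd x y | x y. True}"
  proof -
    have "{gd x y | x y. True} = (\<lambda>(x,y). gd x y) ` UNIV" by auto
    thus ?thesis by simp
  qed
  have "diameter adj \<in> {gd x y | x y. True}" unfolding diameter_def
    using fin by (intro Max_in) auto
  then obtain x0 y0 where xy0: "gd x0 y0 \<ge> 2" using diam by auto
  have "\<exists>u v. gd u v = 2"
  proof (rule ccontr)
    assume no: "\<not> ?thesis"
    have "\<forall>x y. (adj ^^ n) x y \<longrightarrow> x = y \<or> adj x y" for n
    proof (induction n)
      case 0 thus ?case by simp
    next
      case (Suc n)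
      show ?case
      proof (intro allI impI)
        fix x y assume "(adj ^^ Suc n) x y"
        then obtain u where u: "(adj ^^ n) x u" "adj u y" by (auto elim: relpowp_Suc_E)
        show "x = y \<or> adj x y"
        proof (cases "x = u")
          case True thus ?thesis using u by simp
        next
          case False
          hence "adj x u" using Suc u by blast
          thus ?thesis using gd2[of x y u] u no by blast
        qed
      qed
    qed
    hence "x0 = y0 \<or> adj x0 y0" using reach[of x0 y0] by blast
    moreover have "x0 = y0 \<Longrightarrow> gd x0 y0 = 0" using gd0 by simp
    moreover have "adj x0 y0 \<Longrightarrow> gd x0 y0 = 1" using gd1 by simp
    ultimately have "gd x0 y0 \<le> 1" by linarith
    thus False using xy0 by simp
  qed
  then obtain u v where uv: "gd u v = 2" by blast
  have "(adj ^^ Suc 1) u v" using reach[of u v] uv by (simp add: numeral_2_eq_2)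
  then obtain w where w: "adj u w" "adj w v" by (auto elim: relpowp_Suc_E)
  have "u \<noteq> v" "\<not> adj u v" using uv gd0[of u v] gd1[of u v] by auto
  hence "card (N u \<inter> N v) = c 2" using c2card[of u v w] w sym by (auto simp: N_def)
  moreover have "w \<in> N u \<inter> N v" using w sym by (auto simp: N_def)
  hence "card (N u \<inter> N v) \<ge> 1" using card_0_eq[of "N u \<inter> N v"] by fastforce
  ultimately show ?thesis by simp
qed

end



context drg begin

lemma sum_if_card: fixes P :: "'a \<Rightarrow> bool" shows "(\<Sum>j\<in>UNIV. if P j then (k::real) else 0) = k * real (card {j. P j})"
proof -
  have "(\<Sum>j\<in>UNIV. if P j then (k::real) else 0) = (\<Sum>j\<in>{j\<in>UNIV. P j}. k)"
    by (rule sum.inter_filter[symmetric]) simp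
  thus ?thesis by simp
qed

lemma bform_le:
  assumes supp: "\<And>v. v \<notin> N x \<Longrightarrow> f v = 0"
  shows "bform (adj_matrix adj) (\<chi> v. f v) (\<chi> v. f v) \<le> real A * (\<Sum>v\<in>UNIV. (f v)^2)"
proof -
  let ?M = "adj_matrix adj"
  have pt: "(if adj i j then 1 else 0) * f i * f j \<le>
      (if adj i j \<and> adj x j then (f i)^2/2 else 0) + (if adj i j \<and> adj x i then (f j)^2/2 else 0)" for i j
  proof (cases "adj i j")
    case False thus ?thesis by simp
  next
    case True
    show ?thesis
    proof (cases "adj x i \<and> adj x j")
      case True
      have "f i * f j \<le> (f i)^2/2 + (f j)^2/2"
        using sum_squares_bound[of "f i" "f j"] by (simp add: power2_eq_square)
      with True \<open>adj i j\<close> show ?thesis by simp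
    next
      case False
      hence "f i = 0 \<or> f j = 0" using supp by (auto simp: N_def)
      thus ?thesis by auto
    qed
  qed
  have cnt: "real (card {j. adj i j \<and> adj x j}) * (f i)^2 = real A * (f i)^2" for i
  proof (cases "adj x i")
    case True
    have "{j. adj i j \<and> adj x j} = N x \<inter> N i" by (auto simp: N_def)
    thus ?thesis using common[OF True] by simp
  next
    case False thus ?thesis using supp by (simp add: N_def)
  qed
  have cnt2: "real (card {i. adj i j \<and> adj x i}) * (f j)^2 = real A * (f j)^2" for j
  proof -
    have "{i. adj i j \<and> adj x i} = {i. adj j i \<and> adj x i}" using sym by blast
    thus ?thesis using cnt[of j] by simp
  qed
  have "bform ?M (\<chi> v. f v) (\<chi> v. f v) = (\<Sum>i\<in>UNIV. \<Sum>j\<in>UNIV. (if adj i j then 1 else 0) * f i * f j)"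
    unfolding bform_def adj_matrix_def by simp
  also have "\<dots> \<le> (\<Sum>i\<in>UNIV. \<Sum>j\<in>UNIV. (if adj i j \<and> adj x j then (f i)^2/2 else 0) + (if adj i j \<and> adj x i then (f j)^2/2 else 0))"
    by (intro sum_mono pt)
  also have "\<dots> = (\<Sum>i\<in>UNIV. \<Sum>j\<in>UNIV. (if adj i j \<and> adj x j then (f i)^2/2 else 0)) + (\<Sum>j\<in>UNIV. \<Sum>i\<in>UNIV. (if adj i j \<and> adj x i then (f j)^2/2 else 0))"
    by (simp only: sum.distrib) (rule arg_cong[where f="\<lambda>t. _ + t"], rule sum.swap)
  also have "\<dots> = (\<Sum>i\<in>UNIV. real A * (f i)^2 / 2) + (\<Sum>j\<in>UNIV. real A * (f j)^2 / 2)"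
  proof -
    have h1: "(\<Sum>j\<in>UNIV. (if adj i j \<and> adj x j then (f i)^2/2 else 0)) = real A * (f i)^2 / 2" for i
      using cnt[of i] by (simp add: sum_if_card)
    have h2: "(\<Sum>i\<in>UNIV. (if adj i j \<and> adj x i then (f j)^2/2 else 0)) = real A * (f j)^2 / 2" for j
      using cnt2[of j] by (simp add: sum_if_card)
    show ?thesis by (simp only: h1 h2)
  qed
  also have "\<dots> = real A * (\<Sum>v\<in>UNIV. (f v)^2)"
    by (simp add: sum_distrib_left sum_divide_distrib[symmetric])
  finally show ?thesis .
qed

lemma loc:
  assumes supp: "\<And>v. v \<notin> N x \<Longrightarrow> f v = 0"
  shows "(\<Sum>v\<in>UNIV. f v)^2 \<le> real m * (real m + real A) * (\<Sum>v\<in>UNIV. (f v)^2)"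
proof -
  let ?M = "adj_matrix adj"
  define F where "F = (\<chi> v. f v)"
  define D where "D = (\<chi> v. if v = x then 1 else (0::real))"
  define sg where "sg = (\<Sum>v\<in>UNIV. f v)"
  define S where "S = (\<Sum>v\<in>UNIV. (f v)^2)"
  define lam where "lam = sg / real m"
  have symM: "\<And>i j. ?M$i$j = ?M$j$i" unfolding adj_matrix_def using sym by auto
  have fx: "f x = 0" using supp irr by (auto simp: N_def)
  have psd: "bform ?M (F + (-lam) *\<^sub>R D) (F + (-lam) *\<^sub>R D) \<ge> - real m * ((F + (-lam) *\<^sub>R D) \<bullet> (F + (-lam) *\<^sub>R D))"
    by (rule psd_fun[OF sym ev])
  have e1: "bform ?M (F + (-lam) *\<^sub>R D) (F + (-lam) *\<^sub>R D) = bform ?M F F + 2*(-lam)*bform ?M D F + (-lam)^2 * bform ?M D D"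
    by (rule bform_expand[OF symM])
  have dot: "D \<bullet> g = g $ x" for g :: "real^'a"
  proof -
    have "D \<bullet> g = (\<Sum>i\<in>UNIV. (if i = x then g $ x else 0))"
      unfolding D_def inner_vec_def by (intro sum.cong) auto
    thus ?thesis by simp
  qed
  have e2: "bform ?M D F = sg"
  proof -
    have "bform ?M D F = (?M *v F) $ x" by (simp add: bform_mv dot)
    also have "\<dots> = (\<Sum>j\<in>UNIV. if adj x j then f j else 0)"
      unfolding matrix_vector_mult_def adj_matrix_def F_def by simp (rule sum.cong, auto)
    also have "\<dots> = sg" unfolding sg_def using supp by (intro sum.cong) (auto simp: N_def)
    finally show ?thesis .
  qed
  have e3: "bform ?M D D = 0"
  proof -
    have "bform ?M D D = (?M *v D) $ x" by (simp add: bform_mv dot)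
    also have "\<dots> = (\<Sum>j\<in>UNIV. if j = x then ?M$x$x else 0)"
      unfolding matrix_vector_mult_def D_def by (simp add: if_distrib cong: if_cong del: sum.delta)
    also have "\<dots> = 0" using irr by (simp add: adj_matrix_def)
    finally show ?thesis .
  qed
  have FF: "F \<bullet> F = S" unfolding F_def S_def inner_vec_def by (simp add: power2_eq_square)
  have DD: "D \<bullet> D = 1" using dot[of D] by (simp add: D_def)
  have FD: "D \<bullet> F = 0" using dot[of F] fx by (simp add: F_def)
  have e4: "(F + (-lam) *\<^sub>R D) \<bullet> (F + (-lam) *\<^sub>R D) = S + lam^2"
    by (simp add: inner_diff_left inner_diff_right FF DD FD inner_commute[of F D] power2_eq_square)
  have e5: "bform ?M F F \<le> real A * S" unfolding F_def S_def by (rule bform_le[OF supp])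
  have mpos: "real m > 0" using m2 by simp
  have "(real A * S) - (2 * lam * sg) + (real m * S) + (real m * (lam^2)) \<ge> 0"
  proof -
    have "bform ?M F F + 2 * (-lam) * sg + (-lam)^2 * 0 \<ge> - real m * (S + lam^2)"
      using psd unfolding e1 e2 e3 e4 .
    thus ?thesis using e5 by (simp add: algebra_simps)
  qed
  moreover have "2 * lam * sg = 2 * sg^2 / real m" "real m * lam^2 = sg^2 / real m"
    unfolding lam_def using mpos by (simp_all add: power2_eq_square field_simps)
  ultimately have "sg^2 / real m \<le> (real m + real A) * S" by (simp add: algebra_simps)
  hence "sg^2 \<le> real m * ((real m + real A) * S)" using mpos by (simp add: divide_le_eq mult.commute)
  thus ?thesis unfolding sg_def S_def by (simp add: mult.assoc)
qed

end



lemma arith1: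
  fixes M X u :: real
  assumes "M \<ge> 2" "u \<ge> 0" "X \<ge> M^2*(u+1) + 2"
  shows "M*(M+X-1)*((M+1)*(X+M*u)) < ((M+1)*X)^2"
proof -
  define P where "P = M^2*u"
  have P0: "P \<ge> 0" using assms by (simp add: P_def)
  have X0: "X > 0" using assms P0 by (smt (verit) P_def distrib_left mult_nonneg_nonneg zero_le_power2)
  have h1: "X*(X - M^2 + M - P) \<ge> X*(M+2)"
    using X0 assms by (intro mult_left_mono) (auto simp: P_def algebra_simps)
  have "M^2*(u+1) = P + M^2" by (simp add: P_def algebra_simps)
  hence PX: "P + 2 \<le> X" using assms(3) zero_le_power2[of M] by linarith
  have h2: "X*(M+2) \<ge> (P+2)*(M+2)"
    using assms PX by (intro mult_right_mono) auto
  have h3: "(P+2)*(M+2) - P*(M-1) = 3*P + 2*M + 4" by (simp add: algebra_simps)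
  have id: "(M+1)*X^2 - M*(M+X-1)*(X+M*u) = X*(X - M^2 + M - P) - P*(M-1)"
    by (simp add: P_def algebra_simps power2_eq_square)
  have "(M+1)*X^2 - M*(M+X-1)*(X+M*u) > 0" using h1 h2 h3 id P0 assms by linarith
  hence "M*(M+X-1)*(X+M*u) < (M+1)*X^2" by simp
  hence "(M+1)*(M*(M+X-1)*(X+M*u)) < (M+1)*((M+1)*X^2)" using assms by simp
  thus ?thesis by (simp add: power2_eq_square algebra_simps)
qed

context drg begin

definition coclique where "coclique I \<longleftrightarrow> (\<forall>a\<in>I. \<forall>b\<in>I. \<not> adj a b)"

lemma card_pair_le:
  assumes "y \<in> N x" "z \<in> N x" "y \<noteq> z" "\<not> adj y z"
  shows "card (insert y (N y \<inter> N x) \<inter> insert z (N z \<inter> N x)) \<le> c 2 - 1"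
proof -
  have sub: "insert y (N y \<inter> N x) \<inter> insert z (N z \<inter> N x) \<subseteq> (N y \<inter> N z) - {x}"
    using assms sym irr by (auto simp: N_def)
  have "x \<in> N y \<inter> N z" using assms sym by (auto simp: N_def)
  hence "card (N y \<inter> N z) = c 2" using c2card[of y z x] assms by simp
  hence "card ((N y \<inter> N z) - {x}) = c 2 - 1" using \<open>x \<in> N y \<inter> N z\<close> by simp
  thus ?thesis using sub card_mono[OF _ sub] by simp
qed

lemma Bcard: assumes "y \<in> N x" shows "card (insert y (N y \<inter> N x)) = A + 1"
proof -
  have "y \<notin> N y \<inter> N x" using irr by (simp add: N_def)
  moreover have "card (N y \<inter> N x) = A" using common[of x y] assms by (simp add: N_def Int_commute)
  ultimately show ?thesis by simp
qed

lemma alpha: assumes "I \<subseteq> N x" "coclique I" shows "card I \<le> m"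
proof (rule ccontr)
  assume "\<not> card I \<le> m"
  then obtain J where J: "J \<subseteq> I" "card J = m + 1" using obtain_subset_with_card_n[of "m+1" I] by auto
  have finJ: "finite J" by simp
  define B where "B y = insert y (N y \<inter> N x)" for y
  define f where "f v = (\<Sum>y\<in>J. if v \<in> B y then 1 else (0::real))" for v
  have JN: "J \<subseteq> N x" using J assms by auto
  have coc: "\<And>a b. a \<in> J \<Longrightarrow> b \<in> J \<Longrightarrow> \<not> adj a b" using J assms by (auto simp: coclique_def)
  have BN: "B y \<subseteq> N x" if "y \<in> J" for y using JN that by (auto simp: B_def)
  have cB: "card (B y) = A + 1" if "y \<in> J" for y using Bcard JN that by (auto simp: B_def)
  have cBB: "card (B y \<inter> B z) \<le> c 2 - 1" if "y \<in> J" "z \<in> J" "y \<noteq> z" for y z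
    using card_pair_le[of y x z] JN that coc by (auto simp: B_def)
  have supp: "f v = 0" if "v \<notin> N x" for v
    unfolding f_def using BN that by (intro sum.neutral) auto
  have s1: "(\<Sum>v\<in>UNIV. f v) = real (m+1) * (real A + 1)"
  proof -
    have "(\<Sum>v\<in>UNIV. f v) = (\<Sum>y\<in>J. \<Sum>v\<in>UNIV. if v \<in> B y then 1 else (0::real))"
      unfolding f_def by (rule sum.swap)
    also have "\<dots> = (\<Sum>y\<in>J. real A + 1)"
      using cB by (intro sum.cong) (auto simp: sum_if_card)
    also have "\<dots> = real (m+1) * (real A + 1)" using J by simp
    finally show ?thesis .
  qed
  have sq: "(f v)^2 = (\<Sum>y\<in>J. \<Sum>z\<in>J. if v \<in> B y \<inter> B z then 1 else (0::real))" for v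
    unfolding f_def power2_eq_square sum_product by (intro sum.cong) auto
  have inner: "(\<Sum>z\<in>J. real (card (B y \<inter> B z))) \<le> real A + 1 + real m * real (c 2 - 1)" if "y \<in> J" for y
  proof -
    have "(\<Sum>z\<in>J. real (card (B y \<inter> B z))) = real (card (B y \<inter> B y)) + (\<Sum>z\<in>J - {y}. real (card (B y \<inter> B z)))"
      using that finJ by (simp add: sum.remove)
    also have "\<dots> \<le> (real A + 1) + (\<Sum>z\<in>J - {y}. real (c 2 - 1))"
      using cB[OF that] cBB that by (intro add_mono sum_mono) auto
    also have "\<dots> = real A + 1 + real m * real (c 2 - 1)" using that J by simp
    finally show ?thesis .
  qed
  have s2: "(\<Sum>v\<in>UNIV. (f v)^2) \<le> real (m+1) * (real A + 1 + real m * real (c 2 - 1))"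
  proof -
    have "(\<Sum>v\<in>UNIV. (f v)^2) = (\<Sum>v\<in>UNIV. \<Sum>y\<in>J. \<Sum>z\<in>J. if v \<in> B y \<inter> B z then 1 else (0::real))"
      using sq by simp
    also have "\<dots> = (\<Sum>y\<in>J. \<Sum>v\<in>UNIV. \<Sum>z\<in>J. if v \<in> B y \<inter> B z then 1 else (0::real))"
      by (rule sum.swap)
    also have "\<dots> = (\<Sum>y\<in>J. \<Sum>z\<in>J. \<Sum>v\<in>UNIV. if v \<in> B y \<inter> B z then 1 else (0::real))"
      by (intro sum.cong refl sum.swap)
    also have "\<dots> = (\<Sum>y\<in>J. \<Sum>z\<in>J. real (card (B y \<inter> B z)))"
      by (simp add: sum_if_card Int_def)
    also have "\<dots> \<le> (\<Sum>y\<in>J. real A + 1 + real m * real (c 2 - 1))"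
      using inner by (intro sum_mono) auto
    also have "\<dots> = real (m+1) * (real A + 1 + real m * real (c 2 - 1))" using J by simp
    finally show ?thesis .
  qed
  have L: "(real (m+1) * (real A + 1))^2 \<le> real m * (real m + real A) * (real (m+1) * (real A + 1 + real m * real (c 2 - 1)))"
  proof -
    have "(real (m+1) * (real A + 1))^2 \<le> real m * (real m + real A) * (\<Sum>v\<in>UNIV. (f v)^2)"
      using loc[of x f] supp s1 by simp
    also have "\<dots> \<le> real m * (real m + real A) * (real (m+1) * (real A + 1 + real m * real (c 2 - 1)))"
      by (intro mult_left_mono s2) auto
    finally show ?thesis .
  qed
  have c2: "c 2 \<ge> 1" by (rule c2pos)
  have "A \<ge> m^2 * c 2 + 1" using big by simp
  hence "real A \<ge> real m^2 * (real (c 2 - 1) + 1) + 1" using c2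
    by (metis (mono_tags, lifting) Suc_eq_plus1 le_add_diff_inverse2 of_nat_1 of_nat_add of_nat_le_iff of_nat_mult of_nat_power)
  hence "real m*(real m+(real A + 1)-1)*((real m+1)*((real A+1)+real m*real (c 2 - 1))) < ((real m+1)*(real A + 1))^2"
    using m2 by (intro arith1) auto
  thus False using L by (simp add: algebra_simps)
qed

end



lemma max_card_elem:
  fixes S :: "'b set set"
  assumes "finite S" "S \<noteq> {}"
  shows "\<exists>X\<in>S. \<forall>Y\<in>S. card Y \<le> card X"
proof -
  have "Max (card ` S) \<in> card ` S" using assms by (intro Max_in) auto
  then obtain X where X: "X \<in> S" "card X = Max (card ` S)" by auto
  moreover have "\<forall>Y\<in>S. card Y \<le> Max (card ` S)" using assms by auto
  ultimately show ?thesis by metis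
qed

lemma union_lb:
  assumes "finite J" "\<forall>y\<in>J. card (B y) = K" "\<forall>y\<in>J. \<forall>z\<in>J. y \<noteq> z \<longrightarrow> card (B y \<inter> B z) \<le> mu"
    "\<forall>y. finite (B y)"
  shows "2 * card J * K \<le> 2 * card (\<Union>(B ` J)) + card J * (card J - 1) * mu"
  using assms
proof (induction J rule: finite_induct)
  case empty thus ?case by simp
next
  case (insert a J)
  define n where "n = card J"
  define U where "U = \<Union>(B ` J)"
  have IH: "2 * n * K \<le> 2 * card U + n * (n - 1) * mu"
    using insert unfolding n_def U_def by auto
  have fU: "finite U" unfolding U_def using insert by auto
  have cu: "card (B a \<union> U) + card (B a \<inter> U) = K + card U"
    using card_Un_Int[of "B a" U] fU insert by auto
  have eq: "B a \<inter> U = (\<Union>z\<in>J. B a \<inter> B z)" unfolding U_def by auto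
  have "card (B a \<inter> U) \<le> (\<Sum>z\<in>J. card (B a \<inter> B z))" unfolding eq
    by (rule card_UN_le) (use insert in simp)
  also have "\<dots> \<le> (\<Sum>z\<in>J. mu)" using insert by (intro sum_mono) auto
  finally have ci: "card (B a \<inter> U) \<le> n * mu" by (simp add: n_def)
  have ar: "n * (n - 1) * mu + 2 * n * mu = (n + 1) * n * mu"
    by (cases n) (auto simp: algebra_simps)
  have "card (insert a J) = n + 1" using insert by (simp add: n_def)
  moreover have "\<Union>(B ` insert a J) = B a \<union> U" by (simp add: U_def)
  have e1: "2 * (n+1) * K = 2*n*K + 2*K" by (simp add: algebra_simps)
  have "2 * (n+1) * K \<le> 2 * card (B a \<union> U) + (n+1)*n*mu" using IH cu ci ar e1 by linarith
  ultimately show ?case by (simp add: U_def)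
qed

lemma nat_helper: fixes K s P :: nat assumes "2*(s+1)*K \<le> 2*(s*K) + P" shows "2*K \<le> P"
proof -
  have "2*(s+1)*K = 2*(s*K) + 2*K" by (simp add: algebra_simps)
  thus ?thesis using assms by linarith
qed

context drg begin

lemma line_exists:
  assumes xy: "adj x y"
  shows "\<exists>C. maximal_clique adj C \<and> x \<in> C \<and> y \<in> C \<and>
           int (card C) \<ge> int A + 2 - (int m - 1) * (int (c 2) - 1)"
proof -
  have yN: "y \<in> N x" using xy by (simp add: N_def)
  define B where "B z = insert z (N z \<inter> N x)" for z
  define \<I> where "\<I> = {I. I \<subseteq> N x \<and> y \<in> I \<and> coclique I}"
  have "{y} \<in> \<I>" using yN irr by (auto simp: \<I>_def coclique_def)
  then obtain I where II: "I \<in> \<I>" and Imax: "\<forall>I'\<in>\<I>. card I' \<le> card I"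
    using max_card_elem[of \<I>] by auto
  have IN: "I \<subseteq> N x" and yI: "y \<in> I" and Icoc: "coclique I" using II by (auto simp: \<I>_def)
  define s where "s = card I"
  have sm: "s \<le> m" unfolding s_def by (rule alpha[OF IN Icoc])
  have s1: "s \<ge> 1" using yI by (auto simp: s_def card_gt_0_iff Suc_le_eq)
  have c2: "c 2 \<ge> 1" by (rule c2pos)
  define mu where "mu = c 2 - 1"
  have dom: "N x \<subseteq> (\<Union>z\<in>I. B z)"
  proof
    fix v assume v: "v \<in> N x"
    show "v \<in> (\<Union>z\<in>I. B z)"
    proof (cases "v \<in> I \<or> (\<exists>z\<in>I. adj v z)")
      case True thus ?thesis using v by (auto simp: B_def N_def intro: sym)
    next
      case False
      note nF = False
      have "coclique (insert v I)" unfolding coclique_def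
      proof (intro ballI notI)
        fix a b assume a: "a \<in> insert v I" and b: "b \<in> insert v I" and ab: "adj a b"
        have nv: "\<not> adj v z" if "z \<in> I" for z using nF that by simp
        have ic: "\<not> adj p q" if "p \<in> I" "q \<in> I" for p q using Icoc that unfolding coclique_def by simp
        show False
        proof (cases "a = v")
          case True
          show False
          proof (cases "b = v")
            case True thus False using ab irr \<open>a = v\<close> by simp
          next
            case False thus False using b ab nv \<open>a = v\<close> by auto
          qed
        next
          case False
          hence aI: "a \<in> I" using a by simp
          show False
          proof (cases "b = v")
            case True thus False using ab nv[OF aI] sym[of a b] by simp
          next
            case False thus False using b aI ab ic by auto
          qed
        qed
      qed
      hence "insert v I \<in> \<I>" using IN yI v by (auto simp: \<I>_def)
      hence "card (insert v I) \<le> card I" using Imax by blast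
      thus ?thesis using False by simp
    qed
  qed
  have cNx: "card (N x) \<le> s * (A + 1)"
  proof -
    have "card (N x) \<le> card (\<Union>z\<in>I. B z)" using dom by (intro card_mono) auto
    also have "\<dots> \<le> (\<Sum>z\<in>I. card (B z))" by (rule card_UN_le) simp
    also have "\<dots> = (\<Sum>z\<in>I. A + 1)" using IN Bcard by (intro sum.cong) (auto simp: B_def)
    finally show ?thesis by (simp add: s_def)
  qed
  define R where "R = (N y \<inter> N x) - (\<Union>z\<in>I - {y}. N z)"
  have cR: "int (card R) \<ge> int A - int (s - 1) * int mu"
  proof -
    have eq: "(N y \<inter> N x) \<inter> (\<Union>z\<in>I - {y}. N z) = (\<Union>z\<in>I - {y}. N y \<inter> N x \<inter> N z)" by auto
    have "card ((N y \<inter> N x) \<inter> (\<Union>z\<in>I - {y}. N z)) \<le> (\<Sum>z\<in>I - {y}. card (N y \<inter> N x \<inter> N z))"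
      unfolding eq by (rule card_UN_le) simp
    also have "\<dots> \<le> (\<Sum>z\<in>I - {y}. mu)"
    proof (intro sum_mono)
      fix z assume z: "z \<in> I - {y}"
      have zI: "z \<in> I" and yz: "y \<noteq> z" using z by auto
      have zN: "z \<in> N x" using zI IN by auto
      have "\<not> adj y z" using Icoc yI zI unfolding coclique_def by blast
      hence "card (B y \<inter> B z) \<le> mu" using card_pair_le[OF yN zN yz] by (simp add: B_def mu_def)
      moreover have "card (N y \<inter> N x \<inter> N z) \<le> card (B y \<inter> B z)" by (rule card_mono) (auto simp: B_def)
      ultimately show "card (N y \<inter> N x \<inter> N z) \<le> mu" by linarith
    qed
    also have "\<dots> = (s - 1) * mu" using yI by (simp add: s_def)
    finally have h: "card ((N y \<inter> N x) \<inter> (\<Union>z\<in>I - {y}. N z)) \<le> (s - 1) * mu" .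
    have "card R = card (N y \<inter> N x) - card ((N y \<inter> N x) \<inter> (\<Union>z\<in>I - {y}. N z))"
      unfolding R_def by (rule card_Diff_subset_Int) simp
    moreover have "card (N y \<inter> N x) = A" using common[OF xy] by (simp add: Int_commute)
    ultimately have "A \<le> card R + (s-1)*mu" using h by linarith
    hence "int A \<le> int (card R) + int (s-1) * int mu" by (metis of_nat_add of_nat_le_iff of_nat_mult)
    thus ?thesis by linarith
  qed
  have Rcl: "adj w w'" if w: "w \<in> R" "w' \<in> R" "w \<noteq> w'" for w w'
  proof (rule ccontr)
    assume nadj: "\<not> adj w w'"
    define J where "J = insert w (insert w' (I - {y}))"
    have wI: "w \<notin> I - {y}" "w' \<notin> I - {y}"
      using w Icoc yI by (auto simp: R_def coclique_def N_def)
    have JN: "J \<subseteq> N x" using w IN by (auto simp: J_def R_def)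
    have Jcoc: "coclique J"
      unfolding coclique_def
    proof (intro ballI notI)
      have Rw: "\<not> adj z w \<and> \<not> adj z w'" if "z \<in> I - {y}" for z
        using w that by (auto simp: R_def N_def)
      fix a b assume a: "a \<in> J" and b: "b \<in> J" and ab: "adj a b"
      have "a \<in> I - {y} \<Longrightarrow> b \<in> I - {y} \<Longrightarrow> False" using ab Icoc unfolding coclique_def by blast
      moreover have "a = b \<Longrightarrow> False" using ab irr by simp
      moreover have key: "\<not> adj p q" if "q \<in> J" "p \<in> {w,w'}" for p q
      proof -
        have "q \<in> {w, w'} \<or> q \<in> I - {y}" using that(1) unfolding J_def by blast
        thus ?thesis
        proof
          assume "q \<in> {w, w'}"
          thus ?thesis using that(2) nadj irr sym[of w' w] by auto
        next
          assume "q \<in> I - {y}"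
          hence "\<not> adj q p" using Rw that(2) by auto
          thus ?thesis using sym[of p q] by blast
        qed
      qed
      ultimately show False
      proof -
        have "a \<in> {w, w'} \<or> a \<in> I - {y}" "b \<in> {w, w'} \<or> b \<in> I - {y}" using a b unfolding J_def by blast+
        moreover have "a \<in> {w,w'} \<Longrightarrow> False" using key[of b a] b ab by blast
        moreover have "b \<in> {w,w'} \<Longrightarrow> False" using key[of a b] a sym[OF ab] by blast
        ultimately show False using \<open>a \<in> I - {y} \<Longrightarrow> b \<in> I - {y} \<Longrightarrow> False\<close> by blast
      qed
    qed
    have cJ: "card J = s + 1"
    proof -
      have "card (I - {y}) = s - 1" using yI by (simp add: s_def)
      thus ?thesis using wI w s1 by (simp add: J_def)
    qed
    have "2 * card J * (A + 1) \<le> 2 * card (\<Union>(B ` J)) + card J * (card J - 1) * mu"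
    proof (rule union_lb)
      show "\<forall>z\<in>J. card (B z) = A + 1" using JN Bcard by (auto simp: B_def)
      show "\<forall>y\<in>J. \<forall>z\<in>J. y \<noteq> z \<longrightarrow> card (B y \<inter> B z) \<le> mu"
      proof (intro ballI impI)
        fix p q assume p: "p \<in> J" and q: "q \<in> J" and pq: "p \<noteq> q"
        have "\<not> adj p q" using Jcoc p q unfolding coclique_def by blast
        moreover have "p \<in> N x" "q \<in> N x" using JN p q by auto
        ultimately show "card (B p \<inter> B q) \<le> mu" using card_pair_le[of p x q] pq by (simp add: B_def mu_def)
      qed
    qed (auto simp: B_def)
    moreover have "card (\<Union>(B ` J)) \<le> card (N x)"
      using JN by (intro card_mono) (auto simp: B_def)
    ultimately have "2 * (s+1) * (A + 1) \<le> 2 * (s * (A + 1)) + (s + 1) * s * mu"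
      using cNx cJ by simp
    hence "2 * (A + 1) \<le> (s + 1) * s * mu" by (rule nat_helper)
    also have "\<dots> \<le> (m + 1) * m * mu" using sm by (intro mult_mono) auto
    also have "\<dots> \<le> 2 * m^2 * mu" using m2 by (intro mult_right_mono) (auto simp: power2_eq_square)
    finally have "A + 1 \<le> m^2 * mu" by simp
    moreover have "m^2 * mu \<le> m^2 * c 2" by (intro mult_left_mono) (auto simp: mu_def)
    ultimately show False using big by linarith
  qed
  define Q where "Q = insert x (insert y R)"
  have RN: "adj x r \<and> adj y r" if "r \<in> R" for r using that by (auto simp: R_def N_def)
  have Qcl: "clique adj Q"
    unfolding clique_def Q_def
  proof (intro ballI impI)
    fix p q assume p: "p \<in> insert x (insert y R)" and q: "q \<in> insert x (insert y R)" and pq: "p \<noteq> q"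
    have "adj p q \<or> adj q p" using p q pq RN Rcl xy by auto
    thus "adj p q" using sym[of q p] by blast
  qed
  have xR: "x \<notin> R" "y \<notin> R" "x \<noteq> y" using irr xy by (auto simp: R_def N_def)
  have cQ: "card Q = card R + 2" using xR by (simp add: Q_def)
  define \<C> where "\<C> = {C. clique adj C \<and> Q \<subseteq> C}"
  have "Q \<in> \<C>" using Qcl by (simp add: \<C>_def)
  then obtain C where CC: "C \<in> \<C>" and Cmax: "\<forall>C'\<in>\<C>. card C' \<le> card C"
    using max_card_elem[of \<C>] by auto
  have mc: "maximal_clique adj C"
    unfolding maximal_clique_def
  proof (intro conjI allI impI)
    show "clique adj C" using CC by (simp add: \<C>_def)
    fix C' assume h: "clique adj C' \<and> C \<subseteq> C'"
    hence "C' \<in> \<C>" using CC by (auto simp: \<C>_def)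
    hence "card C' \<le> card C" using Cmax by blast
    thus "C' = C" using h card_seteq[of C' C] by simp
  qed
  have QC: "Q \<subseteq> C" using CC by (simp add: \<C>_def)
  have "card Q \<le> card C" using QC by (intro card_mono) auto
  hence "int (card C) \<ge> int A - int (s - 1) * int mu + 2" using cR cQ by linarith
  moreover have "int (s - 1) * int mu \<le> (int m - 1) * int mu"
    using sm s1 by (intro mult_right_mono) auto
  moreover have "int mu = int (c 2) - 1" using c2 by (simp add: mu_def)
  ultimately have "int (card C) \<ge> int A + 2 - (int m - 1) * (int (c 2) - 1)" by (simp add: algebra_simps)
  moreover have "x \<in> C" "y \<in> C" using QC by (auto simp: Q_def)
  ultimately show ?thesis using mc by blast
qed

end



context drg begin

lemma clique_adj: "clique adj C \<Longrightarrow> p \<in> C \<Longrightarrow> q \<in> C \<Longrightarrow> p \<noteq> q \<Longrightarrow> adj p q"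
  unfolding clique_def by blast

definition lineP where
  "lineP C \<longleftrightarrow> maximal_clique adj C \<and> int (card C) \<ge> int A + 2 - (int m - 1) * (int (c 2) - 1)"

lemma nbr_le:
  assumes L: "maximal_clique adj L" and v: "v \<notin> L" and u: "u \<in> L" and vu: "adj v u"
  shows "card (N v \<inter> L) \<le> c 2"
proof -
  have cl: "clique adj L" using L by (simp add: maximal_clique_def)
  have "\<exists>w\<in>L. \<not> adj v w"
  proof (rule ccontr)
    assume "\<not> ?thesis"
    hence all: "\<forall>w\<in>L. adj v w" by blast
    have "clique adj (insert v L)" unfolding clique_def
    proof (intro ballI impI)
      fix p q assume p: "p \<in> insert v L" and q: "q \<in> insert v L" and pq: "p \<noteq> q"
      show "adj p q"
      proof (cases "p = v")
        case True thus ?thesis using q pq all by auto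
      next
        case False
        hence pL: "p \<in> L" using p by simp
        show ?thesis
        proof (cases "q = v")
          case True thus ?thesis using all pL sym[of v p] by simp
        next
          case False thus ?thesis using q pL pq cl unfolding clique_def by auto
        qed
      qed
    qed
    hence "insert v L = L" using L unfolding maximal_clique_def by blast
    thus False using v by blast
  qed
  then obtain w where w: "w \<in> L" "\<not> adj v w" by blast
  have vw: "v \<noteq> w" using w v by auto
  have uw: "u \<noteq> w" using w vu by auto
  have "adj u w" using cl u w uw unfolding clique_def by blast
  hence "u \<in> N v \<inter> N w" using vu sym[of u w] by (simp add: N_def)
  hence cc: "card (N v \<inter> N w) = c 2" using c2card[OF vw w(2)] by blast
  have "N v \<inter> L \<subseteq> N v \<inter> N w"
  proof
    fix l assume l: "l \<in> N v \<inter> L"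
    hence "l \<noteq> w" using w by (auto simp: N_def)
    hence "adj w l" using cl l w unfolding clique_def by auto
    thus "l \<in> N v \<inter> N w" using l by (simp add: N_def)
  qed
  hence "card (N v \<inter> L) \<le> card (N v \<inter> N w)" by (intro card_mono) auto
  thus ?thesis using cc by simp
qed

lemma line_unique:
  assumes L1: "lineP L1" and L2: "lineP L2" and xy: "adj x y"
    and in1: "x \<in> L1" "y \<in> L1" and in2: "x \<in> L2" "y \<in> L2"
  shows "L1 = L2"
proof (rule ccontr)
  assume ne: "L1 \<noteq> L2"
  have m1: "maximal_clique adj L1" and m2': "maximal_clique adj L2" using L1 L2 by (auto simp: lineP_def)
  have cl1: "clique adj L1" and cl2: "clique adj L2" using m1 m2' by (auto simp: maximal_clique_def)
  have "\<not> L2 \<subseteq> L1"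
  proof
    assume "L2 \<subseteq> L1"
    hence "L1 = L2" using m2' cl1 unfolding maximal_clique_def by blast
    thus False using ne by simp
  qed
  then obtain v where v: "v \<in> L2" "v \<notin> L1" by blast
  have vx: "v \<noteq> x" using v in1 by auto
  have "adj v x" using cl2 v in2 vx unfolding clique_def by blast
  hence cv: "card (N v \<inter> L1) \<le> c 2" using nbr_le[OF m1 v(2) in1(1)] by blast
  have "L1 \<inter> L2 \<subseteq> N v \<inter> L1"
  proof
    fix z assume z: "z \<in> L1 \<inter> L2"
    hence "z \<noteq> v" using v by auto
    hence "adj v z" using cl2 v z unfolding clique_def by auto
    thus "z \<in> N v \<inter> L1" using z by (simp add: N_def)
  qed
  hence ci: "card (L1 \<inter> L2) \<le> c 2" using cv card_mono[of "N v \<inter> L1" "L1 \<inter> L2"] by simp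
  have sub: "L1 \<union> L2 \<subseteq> insert x (insert y (N x \<inter> N y))"
  proof
    fix z assume z: "z \<in> L1 \<union> L2"
    show "z \<in> insert x (insert y (N x \<inter> N y))"
    proof (cases "z = x \<or> z = y")
      case True thus ?thesis by auto
    next
      case False
      hence zx: "x \<noteq> z" "y \<noteq> z" by auto
      have "adj x z \<and> adj y z"
      proof (cases "z \<in> L1")
        case True thus ?thesis using clique_adj[OF cl1 in1(1) True zx(1)] clique_adj[OF cl1 in1(2) True zx(2)] by simp
      next
        case False
        hence zL: "z \<in> L2" using z by blast
        thus ?thesis using clique_adj[OF cl2 in2(1) zL zx(1)] clique_adj[OF cl2 in2(2) zL zx(2)] by simp
      qed
      thus ?thesis by (simp add: N_def)
    qed
  qed
  have "card (L1 \<union> L2) \<le> card (insert x (insert y (N x \<inter> N y)))" using sub by (intro card_mono) auto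
  also have "\<dots> \<le> A + 2"
  proof -
    have "card (insert x (insert y (N x \<inter> N y))) \<le> Suc (card (insert y (N x \<inter> N y)))" by (simp add: card_insert_if)
    moreover have "card (insert y (N x \<inter> N y)) \<le> Suc (card (N x \<inter> N y))" by (simp add: card_insert_if)
    ultimately show ?thesis using common[OF xy] by linarith
  qed
  finally have cu: "card (L1 \<union> L2) \<le> A + 2" .
  have "card L1 + card L2 = card (L1 \<union> L2) + card (L1 \<inter> L2)" by (rule card_Un_Int) auto
  hence sumle: "int (card L1) + int (card L2) \<le> int A + 2 + int (c 2)" using cu ci by linarith
  define mu where "mu = int (c 2) - 1"
  have mu0: "mu \<ge> 0" using c2pos by (simp add: mu_def)
  have t1: "int (card L1) \<ge> int A + 2 - (int m - 1) * mu" using L1 by (simp add: lineP_def mu_def)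
  have t2: "int (card L2) \<ge> int A + 2 - (int m - 1) * mu" using L2 by (simp add: lineP_def mu_def)
  have big': "int A \<ge> int m^2 * (mu + 1) + 1"
  proof -
    have "A \<ge> m^2 * c 2 + 1" using big by simp
    hence "int A \<ge> int (m^2 * c 2) + 1" by linarith
    thus ?thesis by (simp add: mu_def)
  qed
  have "int m^2 - (2 * int m - 1) = (int m - 1)^2" by (simp add: power2_eq_square algebra_simps)
  hence "int m^2 \<ge> 2 * int m - 1" using zero_le_power2[of "int m - 1"] by linarith
  hence h: "int m^2 * mu \<ge> (2 * int m - 1) * mu" using mu0 by (intro mult_right_mono) auto
  have h2: "int m^2 \<ge> 1" using \<open>int m^2 \<ge> 2 * int m - 1\<close> m2 by linarith
  have "int m^2 * (mu + 1) = int m^2 * mu + int m^2" by (simp add: algebra_simps)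
  moreover have "(2 * int m - 1) * mu = 2 * ((int m - 1) * mu) + mu" by (simp add: algebra_simps)
  ultimately show False using sumle t1 t2 big' h h2 mu_def by linarith
qed

end



context drg begin

lemma greedy:
  assumes "finite F" "\<forall>L\<in>F. lineP L \<and> x \<in> L" "card F \<le> m + 1"
  shows "\<exists>I. I \<subseteq> N x \<and> coclique I \<and> card I = card F \<and> I \<subseteq> \<Union>F"
  using assms
proof (induction F rule: finite_induct)
  case empty
  show ?case by (rule exI[of _ "{}"]) (simp add: coclique_def)
next
  case (insert L F)
  have cF: "card F \<le> m" using insert by simp
  obtain I where I: "I \<subseteq> N x" "coclique I" "card I = card F" "I \<subseteq> \<Union>F"
    using insert by auto
  have Ll: "lineP L" and xL: "x \<in> L" using insert by auto
  have mL: "maximal_clique adj L" using Ll by (simp add: lineP_def)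
  have clL: "clique adj L" using mL by (simp add: maximal_clique_def)
  have zL: "z \<notin> L" if z: "z \<in> I" for z
  proof
    assume zL: "z \<in> L"
    obtain L' where L': "L' \<in> F" "z \<in> L'" using I(4) z by blast
    have "adj x z" using I(1) z by (auto simp: N_def)
    hence "L = L'" using line_unique[OF Ll _ _ xL zL] L' insert.prems by auto
    thus False using L' insert.hyps by auto
  qed
  have c2: "c 2 \<ge> 1" by (rule c2pos)
  have cz: "card (N z \<inter> (L - {x})) \<le> c 2 - 1" if z: "z \<in> I" for z
  proof -
    have "adj z x" using I(1) z sym by (auto simp: N_def)
    hence "card (N z \<inter> L) \<le> c 2" using nbr_le[OF mL zL[OF z] xL] by blast
    moreover have "x \<in> N z \<inter> L" using \<open>adj z x\<close> xL by (simp add: N_def)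
    moreover have "N z \<inter> (L - {x}) = (N z \<inter> L) - {x}" by auto
    ultimately show ?thesis by simp
  qed
  have bigL: "card I * (c 2 - 1) < card (L - {x})"
  proof -
    define mu where "mu = int (c 2) - 1"
    have mu0: "mu \<ge> 0" using c2 by (simp add: mu_def)
    have t: "int (card L) \<ge> int A + 2 - (int m - 1) * mu" using Ll by (simp add: lineP_def mu_def)
    have cLx: "int (card (L - {x})) = int (card L) - 1" using xL
    proof -
      have "card L \<ge> 1" using xL card_0_eq[of L] by fastforce
      thus ?thesis using xL by simp
    qed
    have big': "int A \<ge> int m^2 * (mu + 1) + 1"
    proof -
      have "A \<ge> m^2 * c 2 + 1" using big by simp
      hence "int A \<ge> int (m^2 * c 2) + 1" by linarith
      thus ?thesis by (simp add: mu_def)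
    qed
    have "int m^2 - (2 * int m - 1) = (int m - 1)^2" by (simp add: power2_eq_square algebra_simps)
    hence sq: "int m^2 \<ge> 2 * int m - 1" using zero_le_power2[of "int m - 1"] by linarith
    hence h: "int m^2 * mu \<ge> (2 * int m - 1) * mu" using mu0 by (intro mult_right_mono) auto
    have h2: "int m^2 \<ge> 1" using sq m2 by linarith
    have ci: "int (card I) * mu \<le> int m * mu" using cF I(3) mu0 by (intro mult_right_mono) auto
    have "int m^2 * (mu + 1) = int m^2 * mu + int m^2" by (simp add: algebra_simps)
    moreover have "(2 * int m - 1) * mu = (int m - 1) * mu + int m * mu" by (simp add: algebra_simps)
    ultimately have "int (card I) * mu < int (card (L - {x}))"
      using t cLx big' h h2 ci by linarith
    moreover have "int (card I * (c 2 - 1)) = int (card I) * mu" using c2 by (simp add: mu_def of_nat_diff)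
    ultimately show ?thesis by linarith
  qed
  have "\<exists>y\<in>L - {x}. \<forall>z\<in>I. \<not> adj z y"
  proof (rule ccontr)
    assume "\<not> ?thesis"
    hence "L - {x} \<subseteq> (\<Union>z\<in>I. N z \<inter> (L - {x}))" by (auto simp: N_def)
    hence "card (L - {x}) \<le> card (\<Union>z\<in>I. N z \<inter> (L - {x}))" by (intro card_mono) auto
    also have "\<dots> \<le> (\<Sum>z\<in>I. card (N z \<inter> (L - {x})))" by (rule card_UN_le) simp
    also have "\<dots> \<le> (\<Sum>z\<in>I. c 2 - 1)" using cz by (intro sum_mono) auto
    also have "\<dots> = card I * (c 2 - 1)" by simp
    finally show False using bigL by simp
  qed
  then obtain y where y: "y \<in> L" "y \<noteq> x" and ny: "\<And>z. z \<in> I \<Longrightarrow> \<not> adj z y" by blast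
  have yN: "y \<in> N x" using clique_adj[OF clL xL y(1)] y(2) by (simp add: N_def)
  have yI: "y \<notin> I" using zL y(1) by blast
  have coc: "coclique (insert y I)" unfolding coclique_def
  proof (intro ballI notI)
    fix p q assume p: "p \<in> insert y I" and q: "q \<in> insert y I" and pq: "adj p q"
    show False
    proof (cases "p = y")
      case True
      show False
      proof (cases "q = y")
        case True thus False using pq irr \<open>p = y\<close> by simp
      next
        case False
        hence "q \<in> I" using q by simp
        thus False using ny[of q] sym[of p q] pq \<open>p = y\<close> by simp
      qed
    next
      case False
      hence pI: "p \<in> I" using p by simp
      show False
      proof (cases "q = y")
        case True thus False using ny[OF pI] pq by simp
      next
        case False
        hence "q \<in> I" using q by simp
        thus False using I(2) pI pq unfolding coclique_def by blast
      qed
    qed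
  qed
  show ?case
  proof (intro exI conjI)
    show "insert y I \<subseteq> N x" using I(1) yN by simp
    show "coclique (insert y I)" by (rule coc)
    show "card (insert y I) = card (insert L F)" using yI I(3) insert.hyps by simp
    show "insert y I \<subseteq> \<Union>(insert L F)" using I(4) y(1) by auto
  qed
qed

lemma lines_at_vertex: "card {C. lineP C \<and> x \<in> C} \<le> m"
proof (rule ccontr)
  assume "\<not> ?thesis"
  then obtain F where F: "F \<subseteq> {C. lineP C \<and> x \<in> C}" "card F = m + 1"
    using obtain_subset_with_card_n[of "m+1" "{C. lineP C \<and> x \<in> C}"] by auto
  have "finite F" by simp
  then obtain I where I: "I \<subseteq> N x" "coclique I" "card I = m + 1"
    using greedy[of F x] F by auto
  thus False using alpha[OF I(1) I(2)] by simp
qed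

end

theorem proposition5p2:
  fixes adj :: "'a::finite \<Rightarrow> 'a \<Rightarrow> bool" and b c :: "nat \<Rightarrow> nat" and m :: nat
  assumes "m \<ge> 2"
    and "distance_regular adj b c"
    and "\<forall>mu. is_eigenvalue (adj_matrix adj) mu \<longrightarrow> mu \<ge> - real m"
    and "b 0 \<ge> 3"
    and "diameter adj \<ge> 2"
    and "b 0 - b 1 - c 1 > m ^ 2 * c 2"
  defines "line \<equiv> \<lambda>C. maximal_clique adj C \<and>
             int (card C) \<ge> int (b 0 - b 1 - c 1) + 2 - (int m - 1) * (int (c 2) - 1)"
  shows "(\<forall>x. card {C. line C \<and> x \<in> C} \<le> m) \<and>
         (\<forall>x y. adj x y \<longrightarrow> (\<exists>!C. line C \<and> x \<in> C \<and> y \<in> C))"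
proof -
  interpret drg adj b c m using assms(1-6) by unfold_locales
  have lq: "line = lineP" unfolding line_def by (rule ext) (simp add: lineP_def)
  show ?thesis
    unfolding lq
  proof (intro conjI allI impI)
    fix x show "card {C. lineP C \<and> x \<in> C} \<le> m" by (rule lines_at_vertex)
  next
    fix x y assume xy: "adj x y"
    obtain C where C: "maximal_clique adj C" "x \<in> C" "y \<in> C"
      "int (card C) \<ge> int A + 2 - (int m - 1) * (int (c 2) - 1)"
      using line_exists[OF xy] by blast
    have "lineP C" using C by (simp add: lineP_def)
    thus "\<exists>!C. lineP C \<and> x \<in> C \<and> y \<in> C"
      using C line_unique[OF _ _ xy] by blast
  qed
qed


end
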